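(* Let $A = \langle Q, \delta, \gamma, F\rangle$ be a pomset automaton that is well-nested and finitely supported. Then for every state $q \in Q$ there exists a series-parallel rational expression $e_q$ such that $[\![ e_q ]\!] = L_A(q)$.
   Context: Fix a finite alphabet $\Sigma$. A pomset is an isomorphism class of labelled posets $\langle C, \leq, \lambda\rangle$ with $\lambda: C \to \Sigma$; $1$ is the empty pomset and $a\in\Sigma$ denotes the one-point pomset labelled $a$. For pomsets $U,V$ (with disjoint carriers) the sequential composition $U\cdot V$ has carrier $C_U\cup C_V$, order ${\leq_U}\cup{\leq_V}\cup(C_U\times C_V)$ and the union labelling; the parallel composition $U\parallel V$ is the same but with order ${\leq_U}\cup{\leq_V}$. The set $\mathsf{Pom}^{\mathsf{sp}}$ of series-parallel pomsets is the smallest set of pomsets containing $1$ and all $a\in\Sigma$ and closed under $\cdot$ and $\parallel$. For pomset languages, $\mathcal U\cdot\mathcal V=\{U\cdot V\}$, $\mathcal U\parallel\mathcal V=\{U\parallel V\}$, $\mathcal U^*=\bigcup_n\mathcal U^n$ and $\mathcal U^\dagger=\bigcup_n \mathcal U^{(n)}$, where $\mathcal U^0=\mathcal U^{(0)}=\{1\}$, $\mathcal U^{n+1}=\mathcal U\cdot\mathcal U^n$, $\mathcal U^{(n+1)}=\mathcal U\parallel\mathcal U^{(n)}$. Series-parallel rational expressions (spr-expressions) are given by $e,f ::= 0 \mid 1 \mid a\in\Sigma \mid e+f \mid e\cdot f \mid e\parallel f \mid e^* \mid e^\dagger$, with semantics $[\![0]\!]=\emptyset$, $[\![1]\!]=\{1\}$,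 $[\![a]\!]=\{a\}$, $[\![e+f]\!]=[\![e]\!]\cup[\![f]\!]$, $[\![e\cdot f]\!]=[\![e]\!]\cdot[\![f]\!]$, $[\![e\parallel f]\!]=[\![e]\!]\parallel[\![f]\!]$, $[\![e^*]\!]=[\![e]\!]^*$, $[\![e^\dagger]\!]=[\![e]\!]^\dagger$. A pomset automaton (PA) is $A=\langle Q,\delta,\gamma,F\rangle$ with $F\subseteq Q$ the accepting states, $\delta: Q\times\Sigma\to Q$ and $\gamma: Q\times Q\times Q\to Q$. Every PA is assumed to contain states $\bot\in Q\setminus F$ and $\top\in F$ with $\delta(\bot,a)=\delta(\top,a)=\bot$ and $\gamma(\bot,r,s)=\gamma(\top,r,s)=\bot$ for all $a,r,s$. The trace relation ${\to_A}\subseteq Q\times\mathsf{Pom}^{\mathsf{sp}}\times Q$ is the smallest relation with: $q\xrightarrow{1}_A q$; $q\xrightarrow{a}_A\delta(q,a)$; if $q\xrightarrow{U}_A q''$ and $q''\xrightarrow{V}_A q'$ then $q\xrightarrow{U\cdot V}_A q'$; if $r\xrightarrow{U}_A r'\in F$ and $s\xrightarrow{V}_A s'\in F$ then $q\xrightarrow{U\parallel V}_A\gamma(q,r,s)$. The language of $q$ is $L_A(q)=\{U : \exists q'\in F.\ q\xrightarrow{U}_A q'\}$. The trace dependency relation $\preceq_A$ is the smallest preorder on $Q$ such that $r,s\preceq_A q$ whenever $\gamma(q,r,s)\neq\bot$, $\delta(q,a)\preceq_A q$ for all $a$, and $\gamma(q,r,s)\preceq_A q$ for all $r,s$. Write $q\prec_A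 q'$ iff $q\preceq_A q'$ and $q'\not\preceq_A q$. The support $\pi_A(q)$ is the smallest $\preceq_A$-downward-closed subset of $Q$ containing $q$; $A$ is finitely supported if every $\pi_A(q)$ is finite. A state $q$ is sequential if $r,s\prec_A q$ whenever $\gamma(q,r,s)\neq\bot$. A state $q\in F$ is recursive if it is not sequential, $\delta(q,a)=\bot$ for all $a\in\Sigma$, and whenever $\gamma(q,r,s)\neq\bot$ we have $s=q$, $r\prec_A q$ and $\gamma(q,r,s)=\top$. $A$ is well-nested if every state is sequential or recursive. *)

theory Defs
  imports Main
begin

text \<open>Pomsets are isomorphism classes of
finite labelled posets, represented as sets of representatives.\<close>

type_synonym 'a lpo = "nat set \<times> (nat \<times> nat) set \<times> (nat \<Rightarrow> 'a)"

definition lpo_wf :: "'a lpo \<Rightarrow> bool" where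
  "lpo_wf u = (case u of (C, R, l) \<Rightarrow>
     finite C \<and> R \<subseteq> C \<times> C \<and> refl_on C R \<and> antisym R \<and> trans R)"

definition lpo_iso :: "'a lpo \<Rightarrow> 'a lpo \<Rightarrow> bool" where
  "lpo_iso u v = (case u of (C1, R1, l1) \<Rightarrow> case v of (C2, R2, l2) \<Rightarrow>
     (\<exists>f. bij_betw f C1 C2 \<and>
          (\<forall>x\<in>C1. \<forall>y\<in>C1. (x, y) \<in> R1 \<longleftrightarrow> (f x, f y) \<in> R2) \<and>
          (\<forall>x\<in>C1. l2 (f x) = l1 x)))"

type_synonym 'a pomset = "'a lpo set"

definition pcls :: "'a lpo \<Rightarrow> 'a pomset" where
  "pcls u = {v. lpo_wf v \<and> lpo_iso u v}"

definition pomsets :: "'a pomset set" where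
  "pomsets = {pcls u | u. lpo_wf u}"

definition prep :: "'a pomset \<Rightarrow> 'a lpo" where
  "prep U = (SOME u. u \<in> U)"

definition lpo_emb :: "(nat \<Rightarrow> nat) \<Rightarrow> 'a lpo \<Rightarrow> 'a lpo" where
  "lpo_emb f u = (case u of (C, R, l) \<Rightarrow>
     (f ` C, map_prod f f ` R, \<lambda>y. l (inv_into C f y)))"

definition lpo_seq :: "'a lpo \<Rightarrow> 'a lpo \<Rightarrow> 'a lpo" where
  "lpo_seq u v = (case lpo_emb (\<lambda>x. 2 * x) u of (C1, R1, l1) \<Rightarrow>
                  case lpo_emb (\<lambda>x. 2 * x + 1) v of (C2, R2, l2) \<Rightarrow>
     (C1 \<union> C2, R1 \<union> R2 \<union> C1 \<times> C2, \<lambda>x. if x \<in> C1 then l1 x else l2 x))"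

definition lpo_par :: "'a lpo \<Rightarrow> 'a lpo \<Rightarrow> 'a lpo" where
  "lpo_par u v = (case lpo_emb (\<lambda>x. 2 * x) u of (C1, R1, l1) \<Rightarrow>
                  case lpo_emb (\<lambda>x. 2 * x + 1) v of (C2, R2, l2) \<Rightarrow>
     (C1 \<union> C2, R1 \<union> R2, \<lambda>x. if x \<in> C1 then l1 x else l2 x))"

definition pom_one :: "'a pomset" where
  "pom_one = pcls ({}, {}, undefined)"

definition pom_sym :: "'a \<Rightarrow> 'a pomset" where
  "pom_sym a = pcls ({0}, {(0, 0)}, \<lambda>_. a)"

definition pom_seq :: "'a pomset \<Rightarrow> 'a pomset \<Rightarrow> 'a pomset" where
  "pom_seq U V = pcls (lpo_seq (prep U) (prep V))"

definition pom_par :: "'a pomset \<Rightarrow> 'a pomset \<Rightarrow> 'a pomset" where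
  "pom_par U V = pcls (lpo_par (prep U) (prep V))"

inductive_set sp_pomsets :: "'a pomset set" where
  sp_one: "pom_one \<in> sp_pomsets"
| sp_sym: "pom_sym a \<in> sp_pomsets"
| sp_seq: "U \<in> sp_pomsets \<Longrightarrow> V \<in> sp_pomsets \<Longrightarrow> pom_seq U V \<in> sp_pomsets"
| sp_par: "U \<in> sp_pomsets \<Longrightarrow> V \<in> sp_pomsets \<Longrightarrow> pom_par U V \<in> sp_pomsets"

definition lang_seq :: "'a pomset set \<Rightarrow> 'a pomset set \<Rightarrow> 'a pomset set" where
  "lang_seq L M = {pom_seq U V | U V. U \<in> L \<and> V \<in> M}"

definition lang_par :: "'a pomset set \<Rightarrow> 'a pomset set \<Rightarrow> 'a pomset set" where
  "lang_par L M = {pom_par U V | U V. U \<in> L \<and> V \<in> M}"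

fun lang_pow :: "'a pomset set \<Rightarrow> nat \<Rightarrow> 'a pomset set" where
  "lang_pow L 0 = {pom_one}"
| "lang_pow L (Suc n) = lang_seq L (lang_pow L n)"

fun lang_ppow :: "'a pomset set \<Rightarrow> nat \<Rightarrow> 'a pomset set" where
  "lang_ppow L 0 = {pom_one}"
| "lang_ppow L (Suc n) = lang_par L (lang_ppow L n)"

definition lang_star :: "'a pomset set \<Rightarrow> 'a pomset set" where
  "lang_star L = (\<Union>n. lang_pow L n)"

definition lang_dagger :: "'a pomset set \<Rightarrow> 'a pomset set" where
  "lang_dagger L = (\<Union>n. lang_ppow L n)"

datatype 'a spr =
    Zero | One | Sym 'a | Plus "'a spr" "'a spr" | Seq "'a spr" "'a spr"
  | Par "'a spr" "'a spr" | Star "'a spr" | Dagger "'a spr"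

fun spr_sem :: "'a spr \<Rightarrow> 'a pomset set" where
  "spr_sem Zero = {}"
| "spr_sem One = {pom_one}"
| "spr_sem (Sym a) = {pom_sym a}"
| "spr_sem (Plus e f) = spr_sem e \<union> spr_sem f"
| "spr_sem (Seq e f) = lang_seq (spr_sem e) (spr_sem f)"
| "spr_sem (Par e f) = lang_par (spr_sem e) (spr_sem f)"
| "spr_sem (Star e) = lang_star (spr_sem e)"
| "spr_sem (Dagger e) = lang_dagger (spr_sem e)"

definition is_PA :: "('q \<Rightarrow> 'a \<Rightarrow> 'q) \<Rightarrow> ('q \<Rightarrow> 'q \<Rightarrow> 'q \<Rightarrow> 'q) \<Rightarrow> 'q set \<Rightarrow> 'q \<Rightarrow> 'q \<Rightarrow> bool" where
  "is_PA \<delta> \<gamma> F qbot qtop =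
     (qbot \<notin> F \<and> qtop \<in> F \<and>
      (\<forall>a. \<delta> qbot a = qbot \<and> \<delta> qtop a = qbot) \<and>
      (\<forall>r s. \<gamma> qbot r s = qbot \<and> \<gamma> qtop r s = qbot))"

inductive trace :: "('q \<Rightarrow> 'a \<Rightarrow> 'q) \<Rightarrow> ('q \<Rightarrow> 'q \<Rightarrow> 'q \<Rightarrow> 'q) \<Rightarrow> 'q set
                    \<Rightarrow> 'q \<Rightarrow> 'a pomset \<Rightarrow> 'q \<Rightarrow> bool"
  for \<delta> \<gamma> F where
  tr_one: "trace \<delta> \<gamma> F q pom_one q"
| tr_sym: "trace \<delta> \<gamma> F q (pom_sym a) (\<delta> q a)"
| tr_seq: "trace \<delta> \<gamma> F q U q'' \<Longrightarrow> trace \<delta> \<gamma> F q'' V q' \<Longrightarrow> trace \<delta> \<gamma> F q (pom_seq U V) q'"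
| tr_par: "trace \<delta> \<gamma> F r U r' \<Longrightarrow> r' \<in> F \<Longrightarrow> trace \<delta> \<gamma> F s V s' \<Longrightarrow> s' \<in> F \<Longrightarrow>
           trace \<delta> \<gamma> F q (pom_par U V) (\<gamma> q r s)"

definition PA_lang :: "('q \<Rightarrow> 'a \<Rightarrow> 'q) \<Rightarrow> ('q \<Rightarrow> 'q \<Rightarrow> 'q \<Rightarrow> 'q) \<Rightarrow> 'q set \<Rightarrow> 'q \<Rightarrow> 'a pomset set" where
  "PA_lang \<delta> \<gamma> F q = {U. \<exists>q'\<in>F. trace \<delta> \<gamma> F q U q'}"

inductive dep_step :: "('q \<Rightarrow> 'a \<Rightarrow> 'q) \<Rightarrow> ('q \<Rightarrow> 'q \<Rightarrow> 'q \<Rightarrow> 'q) \<Rightarrow> 'q \<Rightarrow> 'q \<Rightarrow> 'q \<Rightarrow> bool"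
  for \<delta> \<gamma> qbot where
  ds_left: "\<gamma> q r s \<noteq> qbot \<Longrightarrow> dep_step \<delta> \<gamma> qbot r q"
| ds_right: "\<gamma> q r s \<noteq> qbot \<Longrightarrow> dep_step \<delta> \<gamma> qbot s q"
| ds_delta: "dep_step \<delta> \<gamma> qbot (\<delta> q a) q"
| ds_gamma: "dep_step \<delta> \<gamma> qbot (\<gamma> q r s) q"

definition dep :: "('q \<Rightarrow> 'a \<Rightarrow> 'q) \<Rightarrow> ('q \<Rightarrow> 'q \<Rightarrow> 'q \<Rightarrow> 'q) \<Rightarrow> 'q \<Rightarrow> 'q \<Rightarrow> 'q \<Rightarrow> bool" where
  "dep \<delta> \<gamma> qbot = (dep_step \<delta> \<gamma> qbot)\<^sup>*\<^sup>*"

definition dep_strict :: "('q \<Rightarrow> 'a \<Rightarrow> 'q) \<Rightarrow> ('q \<Rightarrow> 'q \<Rightarrow> 'q \<Rightarrow> 'q) \<Rightarrow> 'q \<Rightarrow> 'q \<Rightarrow> 'q \<Rightarrow> bool" where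
  "dep_strict \<delta> \<gamma> qbot q q' = (dep \<delta> \<gamma> qbot q q' \<and> \<not> dep \<delta> \<gamma> qbot q' q)"

definition support :: "('q \<Rightarrow> 'a \<Rightarrow> 'q) \<Rightarrow> ('q \<Rightarrow> 'q \<Rightarrow> 'q \<Rightarrow> 'q) \<Rightarrow> 'q \<Rightarrow> 'q \<Rightarrow> 'q set" where
  "support \<delta> \<gamma> qbot q = \<Inter>{S. q \<in> S \<and> (\<forall>p\<in>S. \<forall>p'. dep \<delta> \<gamma> qbot p' p \<longrightarrow> p' \<in> S)}"

definition fin_supported :: "('q \<Rightarrow> 'a \<Rightarrow> 'q) \<Rightarrow> ('q \<Rightarrow> 'q \<Rightarrow> 'q \<Rightarrow> 'q) \<Rightarrow> 'q \<Rightarrow> bool" where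
  "fin_supported \<delta> \<gamma> qbot = (\<forall>q. finite (support \<delta> \<gamma> qbot q))"

definition sequential_state :: "('q \<Rightarrow> 'a \<Rightarrow> 'q) \<Rightarrow> ('q \<Rightarrow> 'q \<Rightarrow> 'q \<Rightarrow> 'q) \<Rightarrow> 'q \<Rightarrow> 'q \<Rightarrow> bool" where
  "sequential_state \<delta> \<gamma> qbot q =
     (\<forall>r s. \<gamma> q r s \<noteq> qbot \<longrightarrow> dep_strict \<delta> \<gamma> qbot r q \<and> dep_strict \<delta> \<gamma> qbot s q)"

definition recursive_state :: "('q \<Rightarrow> 'a \<Rightarrow> 'q) \<Rightarrow> ('q \<Rightarrow> 'q \<Rightarrow> 'q \<Rightarrow> 'q) \<Rightarrow> 'q set \<Rightarrow> 'q \<Rightarrow> 'q \<Rightarrow> 'q \<Rightarrow> bool" where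
  "recursive_state \<delta> \<gamma> F qbot qtop q =
     (q \<in> F \<and> \<not> sequential_state \<delta> \<gamma> qbot q \<and> (\<forall>a. \<delta> q a = qbot) \<and>
      (\<forall>r s. \<gamma> q r s \<noteq> qbot \<longrightarrow> s = q \<and> dep_strict \<delta> \<gamma> qbot r q \<and> \<gamma> q r s = qtop))"

definition well_nested :: "('q \<Rightarrow> 'a \<Rightarrow> 'q) \<Rightarrow> ('q \<Rightarrow> 'q \<Rightarrow> 'q \<Rightarrow> 'q) \<Rightarrow> 'q set \<Rightarrow> 'q \<Rightarrow> 'q \<Rightarrow> bool" where
  "well_nested \<delta> \<gamma> F qbot qtop =
     (\<forall>q. sequential_state \<delta> \<gamma> qbot q \<or> recursive_state \<delta> \<gamma> F qbot qtop q)"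

end

theory Submission
  imports Defs
begin

lemma iso_refl: "lpo_iso u u"
  unfolding lpo_iso_def by (cases u) (auto intro!: exI[of _ id])

lemma iso_sym: assumes "lpo_iso u v" shows "lpo_iso v u"
proof -
  obtain C1 R1 l1 where u: "u = (C1,R1,l1)" by (cases u)
  obtain C2 R2 l2 where v: "v = (C2,R2,l2)" by (cases v)
  from assms obtain f where f: "bij_betw f C1 C2"
    "\<forall>x\<in>C1. \<forall>y\<in>C1. (x, y) \<in> R1 \<longleftrightarrow> (f x, f y) \<in> R2" "\<forall>x\<in>C1. l2 (f x) = l1 x"
    unfolding lpo_iso_def u v by auto
  let ?g = "inv_into C1 f"
  have g: "bij_betw ?g C2 C1" using f(1) by (rule bij_betw_inv_into)
  have fg: "\<And>x. x \<in> C2 \<Longrightarrow> f (?g x) = x" using f(1) by (meson bij_betw_inv_into_right)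
  have gC: "\<And>x. x \<in> C2 \<Longrightarrow> ?g x \<in> C1" using g by (meson bij_betwE)
  show ?thesis unfolding lpo_iso_def u v
    apply simp
    apply (rule exI[of _ ?g])
    using g f(2,3) fg gC by metis
qed

lemma iso_trans: assumes "lpo_iso u v" "lpo_iso v w" shows "lpo_iso u w"
proof -
  obtain C1 R1 l1 where u: "u = (C1,R1,l1)" by (cases u)
  obtain C2 R2 l2 where v: "v = (C2,R2,l2)" by (cases v)
  obtain C3 R3 l3 where w: "w = (C3,R3,l3)" by (cases w)
  from assms(1) obtain f where f: "bij_betw f C1 C2"
    "\<forall>x\<in>C1. \<forall>y\<in>C1. (x, y) \<in> R1 \<longleftrightarrow> (f x, f y) \<in> R2" "\<forall>x\<in>C1. l2 (f x) = l1 x"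
    unfolding lpo_iso_def u v by auto
  from assms(2) obtain g where g: "bij_betw g C2 C3"
    "\<forall>x\<in>C2. \<forall>y\<in>C2. (x, y) \<in> R2 \<longleftrightarrow> (g x, g y) \<in> R3" "\<forall>x\<in>C2. l3 (g x) = l2 x"
    unfolding lpo_iso_def v w by auto
  have fC: "\<And>x. x \<in> C1 \<Longrightarrow> f x \<in> C2" using f(1) by (meson bij_betwE)
  show ?thesis unfolding lpo_iso_def u w
    apply simp
    apply (rule exI[of _ "g \<circ> f"])
    using bij_betw_trans[OF f(1) g(1)] f(2,3) g(2,3) fC by simp
qed

lemma pcls_eq: "lpo_iso u v \<Longrightarrow> pcls u = pcls v"
  unfolding pcls_def using iso_sym iso_trans by blast

lemma in_pcls: "lpo_wf u \<Longrightarrow> u \<in> pcls u"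
  unfolding pcls_def using iso_refl by blast

lemma prep_props: assumes "U \<in> pomsets"
  shows "prep U \<in> U" "lpo_wf (prep U)" "pcls (prep U) = U"
proof -
  obtain u where U: "U = pcls u" "lpo_wf u" using assms unfolding pomsets_def by blast
  have "u \<in> U" using U in_pcls by blast
  then show 1: "prep U \<in> U" unfolding prep_def by (rule someI)
  then show "lpo_wf (prep U)" using U unfolding pcls_def by blast
  from 1 have "lpo_iso u (prep U)" using U unfolding pcls_def by blast
  then show "pcls (prep U) = U" using U pcls_eq by metis
qed

lemma pcls_in: "lpo_wf u \<Longrightarrow> pcls u \<in> pomsets"
  unfolding pomsets_def by blast

lemma emb_iso: assumes "lpo_wf u" "inj f" shows "lpo_iso u (lpo_emb f u)"
proof -
  obtain C R l where u: "u = (C,R,l)" by (cases u)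
  have RC: "R \<subseteq> C \<times> C" using assms(1) unfolding lpo_wf_def u by simp
  have b: "bij_betw f C (f ` C)" using assms(2) by (meson inj_on_subset subset_UNIV inj_on_imp_bij_betw)
  have i: "\<And>x y. f x = f y \<longleftrightarrow> x = y" using assms(2) unfolding inj_def by blast
  have "\<forall>x\<in>C. \<forall>y\<in>C. (x, y) \<in> R \<longleftrightarrow> (f x, f y) \<in> map_prod f f ` R"
    by (auto simp: i)
  moreover have "\<forall>x\<in>C. l (inv_into C f (f x)) = l x"
    using assms(2) by (simp add: inv_into_f_f inj_on_subset[OF assms(2)])
  ultimately show ?thesis unfolding lpo_iso_def lpo_emb_def u using b by auto
qed

lemma emb_wf: assumes "lpo_wf u" "inj f" shows "lpo_wf (lpo_emb f u)"
proof -
  obtain C R l where u: "u = (C,R,l)" by (cases u)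
  have w: "finite C" "R \<subseteq> C \<times> C" "refl_on C R" "antisym R" "trans R"
    using assms(1) unfolding lpo_wf_def u by auto
  have i: "\<And>x y. f x = f y \<longleftrightarrow> x = y" using assms(2) unfolding inj_def by blast
  have "finite (f ` C)" using w by simp
  moreover have "map_prod f f ` R \<subseteq> f ` C \<times> f ` C" using w(2) by auto
  moreover have "refl_on (f ` C) (map_prod f f ` R)" using w(3) unfolding refl_on_def by auto
  moreover have "antisym (map_prod f f ` R)" using w(4) unfolding antisym_def by (auto simp: i)
  moreover have "trans (map_prod f f ` R)" using w(5) unfolding trans_def by (auto simp: i)
  ultimately show ?thesis unfolding lpo_wf_def lpo_emb_def u by simp
qed

definition Dseq :: "'a lpo \<Rightarrow> 'a lpo \<Rightarrow> 'a lpo" where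
  "Dseq u v = (case u of (C1, R1, l1) \<Rightarrow> case v of (C2, R2, l2) \<Rightarrow>
     (C1 \<union> C2, R1 \<union> R2 \<union> C1 \<times> C2, \<lambda>x. if x \<in> C1 then l1 x else l2 x))"

definition Dpar :: "'a lpo \<Rightarrow> 'a lpo \<Rightarrow> 'a lpo" where
  "Dpar u v = (case u of (C1, R1, l1) \<Rightarrow> case v of (C2, R2, l2) \<Rightarrow>
     (C1 \<union> C2, R1 \<union> R2, \<lambda>x. if x \<in> C1 then l1 x else l2 x))"

lemma lpo_seq_D: "lpo_seq u v = Dseq (lpo_emb (\<lambda>x. 2 * x) u) (lpo_emb (\<lambda>x. 2 * x + 1) v)"
  unfolding lpo_seq_def Dseq_def ..

lemma lpo_par_D: "lpo_par u v = Dpar (lpo_emb (\<lambda>x. 2 * x) u) (lpo_emb (\<lambda>x. 2 * x + 1) v)"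
  unfolding lpo_par_def Dpar_def ..

definition car :: "'a lpo \<Rightarrow> nat set" where "car u = fst u"

lemma car_emb: "car (lpo_emb f u) = f ` car u"
  unfolding car_def lpo_emb_def by (cases u) auto

lemma Dseq_wf: assumes "lpo_wf u" "lpo_wf v" "car u \<inter> car v = {}"
  shows "lpo_wf (Dseq u v)"
proof -
  obtain C1 R1 l1 where u: "u = (C1,R1,l1)" by (cases u)
  obtain C2 R2 l2 where v: "v = (C2,R2,l2)" by (cases v)
  have w: "finite C1" "R1 \<subseteq> C1 \<times> C1" "refl_on C1 R1" "antisym R1" "trans R1"
    using assms(1) unfolding lpo_wf_def u by auto
  have w2: "finite C2" "R2 \<subseteq> C2 \<times> C2" "refl_on C2 R2" "antisym R2" "trans R2"
    using assms(2) unfolding lpo_wf_def v by auto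
  have d: "C1 \<inter> C2 = {}" using assms(3) unfolding car_def u v by simp
  have "refl_on (C1 \<union> C2) (R1 \<union> R2 \<union> C1 \<times> C2)" using w(3) w2(3) unfolding refl_on_def by auto
  moreover have "antisym (R1 \<union> R2 \<union> C1 \<times> C2)" using w(2,4) w2(2,4) d unfolding antisym_def by blast
  moreover have "trans (R1 \<union> R2 \<union> C1 \<times> C2)" using w(2,5) w2(2,5) d unfolding trans_def by blast
  ultimately show ?thesis using w w2 unfolding lpo_wf_def Dseq_def u v by auto
qed

lemma Dpar_wf: assumes "lpo_wf u" "lpo_wf v" "car u \<inter> car v = {}"
  shows "lpo_wf (Dpar u v)"
proof -
  obtain C1 R1 l1 where u: "u = (C1,R1,l1)" by (cases u)
  obtain C2 R2 l2 where v: "v = (C2,R2,l2)" by (cases v)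
  have w: "finite C1" "R1 \<subseteq> C1 \<times> C1" "refl_on C1 R1" "antisym R1" "trans R1"
    using assms(1) unfolding lpo_wf_def u by auto
  have w2: "finite C2" "R2 \<subseteq> C2 \<times> C2" "refl_on C2 R2" "antisym R2" "trans R2"
    using assms(2) unfolding lpo_wf_def v by auto
  have d: "C1 \<inter> C2 = {}" using assms(3) unfolding car_def u v by simp
  have "refl_on (C1 \<union> C2) (R1 \<union> R2)" using w(3) w2(3) unfolding refl_on_def by auto
  moreover have "antisym (R1 \<union> R2)" using w(2,4) w2(2,4) d unfolding antisym_def by blast
  moreover have "trans (R1 \<union> R2)" using w(2,5) w2(2,5) d unfolding trans_def by blast
  ultimately show ?thesis using w w2 unfolding lpo_wf_def Dpar_def u v by auto
qed

lemma seq_rel_cases: "R1 \<subseteq> C1 \<times> C1 \<Longrightarrow> R2 \<subseteq> C2 \<times> C2 \<Longrightarrow> C1 \<inter> C2 = {} \<Longrightarrow>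
  x \<in> C1 \<union> C2 \<Longrightarrow> y \<in> C1 \<union> C2 \<Longrightarrow>
  ((x,y) \<in> R1 \<union> R2 \<union> C1 \<times> C2) = (if x \<in> C1 then (if y \<in> C1 then (x,y) \<in> R1 else True)
     else (if y \<in> C1 then False else (x,y) \<in> R2))"
  by auto

lemma par_rel_cases: "R1 \<subseteq> C1 \<times> C1 \<Longrightarrow> R2 \<subseteq> C2 \<times> C2 \<Longrightarrow> C1 \<inter> C2 = {} \<Longrightarrow>
  x \<in> C1 \<union> C2 \<Longrightarrow> y \<in> C1 \<union> C2 \<Longrightarrow>
  ((x,y) \<in> R1 \<union> R2) = (if x \<in> C1 then (if y \<in> C1 then (x,y) \<in> R1 else False)
     else (if y \<in> C1 then False else (x,y) \<in> R2))"
  by auto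

lemma Dseq_cong: assumes "lpo_iso u u'" "lpo_iso v v'" "lpo_wf u" "lpo_wf v" "lpo_wf u'" "lpo_wf v'"
  "car u \<inter> car v = {}" "car u' \<inter> car v' = {}"
  shows "lpo_iso (Dseq u v) (Dseq u' v')"
proof -
  obtain C1 R1 l1 where u: "u = (C1,R1,l1)" by (cases u)
  obtain C2 R2 l2 where v: "v = (C2,R2,l2)" by (cases v)
  obtain C1' R1' l1' where u': "u' = (C1',R1',l1')" by (cases u')
  obtain C2' R2' l2' where v': "v' = (C2',R2',l2')" by (cases v')
  from assms(1) obtain f where f: "bij_betw f C1 C1'"
    "\<forall>x\<in>C1. \<forall>y\<in>C1. (x, y) \<in> R1 \<longleftrightarrow> (f x, f y) \<in> R1'" "\<forall>x\<in>C1. l1' (f x) = l1 x"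
    unfolding lpo_iso_def u u' by auto
  from assms(2) obtain g where g: "bij_betw g C2 C2'"
    "\<forall>x\<in>C2. \<forall>y\<in>C2. (x, y) \<in> R2 \<longleftrightarrow> (g x, g y) \<in> R2'" "\<forall>x\<in>C2. l2' (g x) = l2 x"
    unfolding lpo_iso_def v v' by auto
  have R: "R1 \<subseteq> C1 \<times> C1" "R2 \<subseteq> C2 \<times> C2" "R1' \<subseteq> C1' \<times> C1'" "R2' \<subseteq> C2' \<times> C2'"
    using assms(3-6) unfolding lpo_wf_def u v u' v' by auto
  have d: "C1 \<inter> C2 = {}" "C1' \<inter> C2' = {}" using assms(7,8) unfolding car_def u v u' v' by auto
  have fC: "\<And>x. x \<in> C1 \<Longrightarrow> f x \<in> C1'" using f(1) by (meson bij_betwE)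
  have gC: "\<And>x. x \<in> C2 \<Longrightarrow> g x \<in> C2'" using g(1) by (meson bij_betwE)
  let ?h = "\<lambda>x. if x \<in> C1 then f x else g x"
  have b: "bij_betw ?h (C1 \<union> C2) (C1' \<union> C2')" using bij_betw_disjoint_Un[OF f(1) g(1) d] .
  have o: "\<forall>x\<in>C1 \<union> C2. \<forall>y\<in>C1 \<union> C2. (x, y) \<in> R1 \<union> R2 \<union> C1 \<times> C2 \<longleftrightarrow>
     (?h x, ?h y) \<in> R1' \<union> R2' \<union> C1' \<times> C2'"
  proof (intro ballI)
    fix x y assume xy: "x \<in> C1 \<union> C2" "y \<in> C1 \<union> C2"
    have hx: "?h x \<in> C1' \<longleftrightarrow> x \<in> C1" "?h x \<in> C1' \<union> C2'" using xy fC gC d by auto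
    have hy: "?h y \<in> C1' \<longleftrightarrow> y \<in> C1" "?h y \<in> C1' \<union> C2'" using xy fC gC d by auto
    show "(x, y) \<in> R1 \<union> R2 \<union> C1 \<times> C2 \<longleftrightarrow> (?h x, ?h y) \<in> R1' \<union> R2' \<union> C1' \<times> C2'"
      apply (subst seq_rel_cases[OF R(1,2) d(1) xy])
      apply (subst seq_rel_cases[OF R(3,4) d(2) hx(2) hy(2)])
      using xy f(2) g(2) hx(1) hy(1) by auto
  qed
  have l: "\<forall>x\<in>C1 \<union> C2. (if ?h x \<in> C1' then l1' (?h x) else l2' (?h x)) = (if x \<in> C1 then l1 x else l2 x)"
    using f(3) g(3) fC gC d by auto
  show ?thesis unfolding lpo_iso_def Dseq_def u v u' v' using b o l
    apply (simp only: prod.case)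
    apply (rule exI[of _ ?h])
    apply (intro conjI)
    using b o l by simp_all
qed

lemma Dpar_cong: assumes "lpo_iso u u'" "lpo_iso v v'" "lpo_wf u" "lpo_wf v" "lpo_wf u'" "lpo_wf v'"
  "car u \<inter> car v = {}" "car u' \<inter> car v' = {}"
  shows "lpo_iso (Dpar u v) (Dpar u' v')"
proof -
  obtain C1 R1 l1 where u: "u = (C1,R1,l1)" by (cases u)
  obtain C2 R2 l2 where v: "v = (C2,R2,l2)" by (cases v)
  obtain C1' R1' l1' where u': "u' = (C1',R1',l1')" by (cases u')
  obtain C2' R2' l2' where v': "v' = (C2',R2',l2')" by (cases v')
  from assms(1) obtain f where f: "bij_betw f C1 C1'"
    "\<forall>x\<in>C1. \<forall>y\<in>C1. (x, y) \<in> R1 \<longleftrightarrow> (f x, f y) \<in> R1'" "\<forall>x\<in>C1. l1' (f x) = l1 x"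
    unfolding lpo_iso_def u u' by auto
  from assms(2) obtain g where g: "bij_betw g C2 C2'"
    "\<forall>x\<in>C2. \<forall>y\<in>C2. (x, y) \<in> R2 \<longleftrightarrow> (g x, g y) \<in> R2'" "\<forall>x\<in>C2. l2' (g x) = l2 x"
    unfolding lpo_iso_def v v' by auto
  have R: "R1 \<subseteq> C1 \<times> C1" "R2 \<subseteq> C2 \<times> C2" "R1' \<subseteq> C1' \<times> C1'" "R2' \<subseteq> C2' \<times> C2'"
    using assms(3-6) unfolding lpo_wf_def u v u' v' by auto
  have d: "C1 \<inter> C2 = {}" "C1' \<inter> C2' = {}" using assms(7,8) unfolding car_def u v u' v' by auto
  have fC: "\<And>x. x \<in> C1 \<Longrightarrow> f x \<in> C1'" using f(1) by (meson bij_betwE)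
  have gC: "\<And>x. x \<in> C2 \<Longrightarrow> g x \<in> C2'" using g(1) by (meson bij_betwE)
  let ?h = "\<lambda>x. if x \<in> C1 then f x else g x"
  have b: "bij_betw ?h (C1 \<union> C2) (C1' \<union> C2')" using bij_betw_disjoint_Un[OF f(1) g(1) d] .
  have o: "\<forall>x\<in>C1 \<union> C2. \<forall>y\<in>C1 \<union> C2. (x, y) \<in> R1 \<union> R2 \<longleftrightarrow>
     (?h x, ?h y) \<in> R1' \<union> R2'"
  proof (intro ballI)
    fix x y assume xy: "x \<in> C1 \<union> C2" "y \<in> C1 \<union> C2"
    have hx: "?h x \<in> C1' \<longleftrightarrow> x \<in> C1" "?h x \<in> C1' \<union> C2'" using xy fC gC d by auto
    have hy: "?h y \<in> C1' \<longleftrightarrow> y \<in> C1" "?h y \<in> C1' \<union> C2'" using xy fC gC d by auto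
    show "(x, y) \<in> R1 \<union> R2 \<longleftrightarrow> (?h x, ?h y) \<in> R1' \<union> R2'"
      apply (subst par_rel_cases[OF R(1,2) d(1) xy])
      apply (subst par_rel_cases[OF R(3,4) d(2) hx(2) hy(2)])
      using xy f(2) g(2) hx(1) hy(1) by auto
  qed
  have l: "\<forall>x\<in>C1 \<union> C2. (if ?h x \<in> C1' then l1' (?h x) else l2' (?h x)) = (if x \<in> C1 then l1 x else l2 x)"
    using f(3) g(3) fC gC d by auto
  show ?thesis unfolding lpo_iso_def Dpar_def u v u' v' using b o l
    apply (simp only: prod.case)
    apply (rule exI[of _ ?h])
    apply (intro conjI)
    using b o l by simp_all
qed


lemma car_Dseq: "car (Dseq u v) = car u \<union> car v"
  unfolding car_def Dseq_def by (cases u; cases v) auto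

lemma car_Dpar: "car (Dpar u v) = car u \<union> car v"
  unfolding car_def Dpar_def by (cases u; cases v) auto

lemma inj_2: "inj (\<lambda>x::nat. 2 * x)" "inj (\<lambda>x::nat. 2 * x + 1)"
  "inj (\<lambda>x::nat. 4 * x)" "inj (\<lambda>x::nat. 4 * x + 1)" "inj (\<lambda>x::nat. 4 * x + 2)"
  by (auto simp: inj_def)

lemma disj_2: "(\<lambda>x::nat. 2 * x) ` A \<inter> (\<lambda>x. 2 * x + 1) ` B = {}"
  "(\<lambda>x::nat. 4 * x) ` A \<inter> (\<lambda>x. 4 * x + 1) ` B = {}"
  "(\<lambda>x::nat. 4 * x) ` A \<inter> (\<lambda>x. 4 * x + 2) ` B = {}"
  "(\<lambda>x::nat. 4 * x + 1) ` A \<inter> (\<lambda>x. 4 * x + 2) ` B = {}"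
  by (auto; presburger)+

lemmas disj_2' = disj_2[simplified]
lemmas inj_2' = inj_2[simplified]

lemma seq_iso_D: assumes "lpo_wf a" "lpo_wf b" "lpo_wf a'" "lpo_wf b'" "lpo_iso a a'" "lpo_iso b b'"
  "car a' \<inter> car b' = {}"
  shows "lpo_iso (lpo_seq a b) (Dseq a' b')"
proof -
  have 1: "lpo_iso (lpo_emb (\<lambda>x. 2 * x) a) a'"
    using iso_trans[OF iso_sym[OF emb_iso[OF assms(1) inj_2(1)]] assms(5)] .
  have 2: "lpo_iso (lpo_emb (\<lambda>x. 2 * x + 1) b) b'"
    using iso_trans[OF iso_sym[OF emb_iso[OF assms(2) inj_2(2)]] assms(6)] .
  show ?thesis unfolding lpo_seq_D
    by (rule Dseq_cong[OF 1 2 emb_wf[OF assms(1) inj_2(1)] emb_wf[OF assms(2) inj_2(2)] assms(3,4)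
      _ assms(7)]) (simp add: car_emb disj_2 disj_2')
qed

lemma par_iso_D: assumes "lpo_wf a" "lpo_wf b" "lpo_wf a'" "lpo_wf b'" "lpo_iso a a'" "lpo_iso b b'"
  "car a' \<inter> car b' = {}"
  shows "lpo_iso (lpo_par a b) (Dpar a' b')"
proof -
  have 1: "lpo_iso (lpo_emb (\<lambda>x. 2 * x) a) a'"
    using iso_trans[OF iso_sym[OF emb_iso[OF assms(1) inj_2(1)]] assms(5)] .
  have 2: "lpo_iso (lpo_emb (\<lambda>x. 2 * x + 1) b) b'"
    using iso_trans[OF iso_sym[OF emb_iso[OF assms(2) inj_2(2)]] assms(6)] .
  show ?thesis unfolding lpo_par_D
    by (rule Dpar_cong[OF 1 2 emb_wf[OF assms(1) inj_2(1)] emb_wf[OF assms(2) inj_2(2)] assms(3,4)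
      _ assms(7)]) (simp add: car_emb disj_2 disj_2')
qed

lemma lpo_seq_wf: "lpo_wf a \<Longrightarrow> lpo_wf b \<Longrightarrow> lpo_wf (lpo_seq a b)"
  unfolding lpo_seq_D by (rule Dseq_wf) (simp_all add: emb_wf inj_2 inj_2' car_emb disj_2 disj_2')

lemma lpo_par_wf: "lpo_wf a \<Longrightarrow> lpo_wf b \<Longrightarrow> lpo_wf (lpo_par a b)"
  unfolding lpo_par_D by (rule Dpar_wf) (simp_all add: emb_wf inj_2 inj_2' car_emb disj_2 disj_2')

lemma pom_seq_in: "U \<in> pomsets \<Longrightarrow> V \<in> pomsets \<Longrightarrow> pom_seq U V \<in> pomsets"
  unfolding pom_seq_def by (intro pcls_in lpo_seq_wf prep_props)

lemma pom_par_in: "U \<in> pomsets \<Longrightarrow> V \<in> pomsets \<Longrightarrow> pom_par U V \<in> pomsets"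
  unfolding pom_par_def by (intro pcls_in lpo_par_wf prep_props)

definition e0 :: "'a lpo" where "e0 = ({}, {}, undefined)"

lemma e0_wf: "lpo_wf e0"
  unfolding e0_def lpo_wf_def refl_on_def antisym_def trans_def by simp

lemma pom_one_in: "pom_one \<in> pomsets"
  unfolding pom_one_def using pcls_in[OF e0_wf] unfolding e0_def .

lemma pom_sym_in: "pom_sym a \<in> pomsets"
  unfolding pom_sym_def by (rule pcls_in) (simp add: lpo_wf_def refl_on_def antisym_def trans_def)

lemma prep_one_aux: "lpo_wf (prep (pom_one :: 'a pomset)) \<and> lpo_iso (e0 :: 'a lpo) (prep (pom_one :: 'a pomset))"
proof -
  have "prep (pom_one :: 'a pomset) \<in> pcls (e0 :: 'a lpo)" using prep_props(1)[OF pom_one_in] unfolding pom_one_def e0_def .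
  then show ?thesis unfolding pcls_def by auto
qed

lemma prep_one: "lpo_wf (prep (pom_one :: 'a pomset))" "lpo_iso (prep (pom_one :: 'a pomset)) (e0 :: 'a lpo)"
  using prep_one_aux iso_sym by blast+

lemma car_e0: "car e0 = {}" unfolding car_def e0_def by simp

lemma seq_one_left: assumes "U \<in> pomsets" shows "pom_seq pom_one U = U"
proof -
  let ?p = "prep U"
  have "lpo_iso (lpo_seq (prep pom_one) ?p) (Dseq e0 ?p)"
    by (rule seq_iso_D) (simp_all add: prep_one e0_wf prep_props[OF assms] iso_refl car_e0)
  moreover have "Dseq e0 ?p = ?p" unfolding Dseq_def e0_def by (cases ?p) auto
  ultimately show ?thesis unfolding pom_seq_def using pcls_eq prep_props(3)[OF assms] by metis
qed

lemma seq_one_right: assumes "U \<in> pomsets" shows "pom_seq U pom_one = U"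
proof -
  let ?p = "prep U"
  have "lpo_iso (lpo_seq ?p (prep pom_one)) (Dseq ?p e0)"
    by (rule seq_iso_D) (simp_all add: prep_one e0_wf prep_props[OF assms] iso_refl car_e0)
  moreover have "lpo_iso (Dseq ?p e0) ?p" unfolding Dseq_def e0_def lpo_iso_def
    by (cases ?p) (auto intro!: exI[of _ id])
  ultimately show ?thesis unfolding pom_seq_def using pcls_eq prep_props(3)[OF assms] iso_trans by metis
qed

lemma Dseq_assoc: "Dseq (Dseq a b) c = Dseq a (Dseq b c)"
  unfolding Dseq_def by (cases a; cases b; cases c) (auto simp: fun_eq_iff)

lemma seq_assoc: assumes "U \<in> pomsets" "V \<in> pomsets" "W \<in> pomsets"
  shows "pom_seq (pom_seq U V) W = pom_seq U (pom_seq V W)"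
proof -
  let ?u = "prep U" and ?v = "prep V" and ?w = "prep W"
  have w: "lpo_wf ?u" "lpo_wf ?v" "lpo_wf ?w" using prep_props assms by blast+
  let ?a = "lpo_emb (\<lambda>x. 4 * x) ?u" and ?b = "lpo_emb (\<lambda>x. 4 * x + 1) ?v"
    and ?c = "lpo_emb (\<lambda>x. 4 * x + 2) ?w"
  have wa: "lpo_wf ?a" "lpo_wf ?b" "lpo_wf ?c" using w emb_wf inj_2 by blast+
  have ia: "lpo_iso ?u ?a" "lpo_iso ?v ?b" "lpo_iso ?w ?c" using w emb_iso inj_2 by blast+
  have d: "car ?a \<inter> car ?b = {}" "car ?a \<inter> car ?c = {}" "car ?b \<inter> car ?c = {}"
    by (simp_all add: car_emb disj_2 disj_2')
  let ?X = "prep (pom_seq U V)" and ?Y = "prep (pom_seq V W)"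
  have X: "lpo_wf ?X" "lpo_iso (lpo_seq ?u ?v) ?X"
    using prep_props(1,2)[OF pom_seq_in[OF assms(1,2)]] unfolding pom_seq_def pcls_def by auto
  have Y: "lpo_wf ?Y" "lpo_iso (lpo_seq ?v ?w) ?Y"
    using prep_props(1,2)[OF pom_seq_in[OF assms(2,3)]] unfolding pom_seq_def pcls_def by auto
  have "lpo_iso (lpo_seq ?u ?v) (Dseq ?a ?b)" by (rule seq_iso_D) (use w wa ia d in auto)
  then have X2: "lpo_iso ?X (Dseq ?a ?b)" using X iso_sym iso_trans by blast
  have "lpo_iso (lpo_seq ?v ?w) (Dseq ?b ?c)" by (rule seq_iso_D) (use w wa ia d in auto)
  then have Y2: "lpo_iso ?Y (Dseq ?b ?c)" using Y iso_sym iso_trans by blast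
  have wab: "lpo_wf (Dseq ?a ?b)" by (rule Dseq_wf) (use wa d in auto)
  have wbc: "lpo_wf (Dseq ?b ?c)" by (rule Dseq_wf) (use wa d in auto)
  have dab: "car (Dseq ?a ?b) \<inter> car ?c = {}" unfolding car_Dseq using d by blast
  have dbc: "car ?a \<inter> car (Dseq ?b ?c) = {}" unfolding car_Dseq using d by blast
  have 1: "lpo_iso (lpo_seq ?X ?w) (Dseq (Dseq ?a ?b) ?c)"
    by (rule seq_iso_D[OF X(1) w(3) wab wa(3) X2 ia(3) dab])
  have 2: "lpo_iso (lpo_seq ?u ?Y) (Dseq ?a (Dseq ?b ?c))"
    by (rule seq_iso_D[OF w(1) Y(1) wa(1) wbc ia(1) Y2 dbc])
  show ?thesis unfolding pom_seq_def[of "pom_seq U V"] pom_seq_def[of U "pom_seq V W"]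
    using pcls_eq[OF 1] pcls_eq[OF 2] Dseq_assoc by metis
qed

definition rat :: "'a pomset set \<Rightarrow> bool" where "rat L \<longleftrightarrow> (\<exists>e. spr_sem e = L)"

lemma rat_zero: "rat {}" unfolding rat_def by (rule exI[of _ Zero]) simp
lemma rat_one: "rat {pom_one}" unfolding rat_def by (rule exI[of _ One]) simp
lemma rat_sym: "rat {pom_sym a}" unfolding rat_def by (rule exI[of _ "Sym a"]) simp
lemma rat_un: "rat A \<Longrightarrow> rat B \<Longrightarrow> rat (A \<union> B)"
  unfolding rat_def by (metis spr_sem.simps(4))
lemma rat_seq: "rat A \<Longrightarrow> rat B \<Longrightarrow> rat (lang_seq A B)"
  unfolding rat_def by (metis spr_sem.simps(5))
lemma rat_par: "rat A \<Longrightarrow> rat B \<Longrightarrow> rat (lang_par A B)"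
  unfolding rat_def by (metis spr_sem.simps(6))
lemma rat_star: "rat A \<Longrightarrow> rat (lang_star A)"
  unfolding rat_def by (metis spr_sem.simps(7))
lemma rat_dagger: "rat A \<Longrightarrow> rat (lang_dagger A)"
  unfolding rat_def by (metis spr_sem.simps(8))
lemma rat_UN: "finite A \<Longrightarrow> (\<And>x. x \<in> A \<Longrightarrow> rat (f x)) \<Longrightarrow> rat (\<Union>x\<in>A. f x)"
  by (induction A rule: finite_induct) (auto intro: rat_zero rat_un)
lemma rat_if: "(P \<Longrightarrow> rat A) \<Longrightarrow> (\<not> P \<Longrightarrow> rat B) \<Longrightarrow> rat (if P then A else B)"
  by auto

lemma in_lang_seq: "U \<in> A \<Longrightarrow> V \<in> B \<Longrightarrow> pom_seq U V \<in> lang_seq A B"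
  unfolding lang_seq_def by blast
lemma lang_seqE: "W \<in> lang_seq A B \<Longrightarrow> (\<And>U V. W = pom_seq U V \<Longrightarrow> U \<in> A \<Longrightarrow> V \<in> B \<Longrightarrow> P) \<Longrightarrow> P"
  unfolding lang_seq_def by blast
lemma lang_seq_sub: "A \<subseteq> pomsets \<Longrightarrow> B \<subseteq> pomsets \<Longrightarrow> lang_seq A B \<subseteq> pomsets"
  unfolding lang_seq_def using pom_seq_in by blast
lemma lang_pow_sub: "A \<subseteq> pomsets \<Longrightarrow> lang_pow A n \<subseteq> pomsets"
  by (induction n) (simp_all add: pom_one_in lang_seq_sub)
lemma lang_star_sub: "A \<subseteq> pomsets \<Longrightarrow> lang_star A \<subseteq> pomsets"
  unfolding lang_star_def using lang_pow_sub by blast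
lemma star_one: "pom_one \<in> lang_star L"
  unfolding lang_star_def by (auto intro: exI[of _ 0])
lemma star_step: assumes "U \<in> L" "V \<in> lang_star L" shows "pom_seq U V \<in> lang_star L"
proof -
  obtain n where "V \<in> lang_pow L n" using assms(2) unfolding lang_star_def by blast
  then have "pom_seq U V \<in> lang_pow L (Suc n)" using assms(1) by (simp add: in_lang_seq)
  then show ?thesis unfolding lang_star_def by blast
qed
lemma star_induct: assumes "W \<in> lang_star L" "P pom_one" "\<And>U V. U \<in> L \<Longrightarrow> P V \<Longrightarrow> P (pom_seq U V)"
  shows "P W"
proof -
  obtain n where "W \<in> lang_pow L n" using assms(1) unfolding lang_star_def by blast
  then show ?thesis
    by (induction n arbitrary: W) (auto simp: assms(2) elim!: lang_seqE intro: assms(3))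
qed

inductive walk :: "'q set \<Rightarrow> ('q \<Rightarrow> 'q \<Rightarrow> 'a pomset set) \<Rightarrow> 'q \<Rightarrow> 'a pomset \<Rightarrow> 'q \<Rightarrow> bool"
  for S E where
  w_refl: "walk S E p pom_one p"
| w_step: "p \<in> S \<Longrightarrow> m \<in> S \<Longrightarrow> U \<in> E p m \<Longrightarrow> walk S E m V p' \<Longrightarrow> walk S E p (pom_seq U V) p'"

lemma walk_in: "walk S E p W p' \<Longrightarrow> (\<forall>a b. E a b \<subseteq> pomsets) \<Longrightarrow> W \<in> pomsets"
  by (induction rule: walk.induct) (auto intro: pom_one_in pom_seq_in)

lemma walk_trans: assumes "walk S E p U m" "walk S E m V p'" "\<forall>a b. E a b \<subseteq> pomsets"
  shows "walk S E p (pom_seq U V) p'"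
  using assms(1,2)
proof (induction rule: walk.induct)
  case (w_refl p)
  then show ?case using seq_one_left walk_in assms(3) by metis
next
  case (w_step p m1 U1 V1 p1)
  have "walk S E p (pom_seq U1 (pom_seq V1 V)) p'"
    by (rule walk.w_step[where E=E and p=p and m=m1 and U=U1, OF w_step(1,2,3)]) (rule w_step.IH[OF w_step.prems])
  moreover have "pom_seq U1 (pom_seq V1 V) = pom_seq (pom_seq U1 V1) V"
  proof -
    have "U1 \<in> pomsets" using w_step(3) assms(3) by blast
    moreover have "V1 \<in> pomsets" using walk_in[OF w_step(4)] assms(3) by blast
    moreover have "V \<in> pomsets" using walk_in[OF w_step.prems] assms(3) by blast
    ultimately show ?thesis by (simp add: seq_assoc)
  qed
  ultimately show ?case by simp
qed

lemma walk_edge: "p \<in> S \<Longrightarrow> m \<in> S \<Longrightarrow> U \<in> E p m \<Longrightarrow> U \<in> pomsets \<Longrightarrow> walk S E p U m"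
  using w_step[OF _ _ _ w_refl, of p S m U E] seq_one_right by metis

lemma walk_mono: "walk S E p W p' \<Longrightarrow> S \<subseteq> S' \<Longrightarrow> walk S' E p W p'"
  by (induction rule: walk.induct) (auto intro: walk.intros)

definition Wf where "Wf F E a b = {W. walk F E a W b}"
definition Loop where "Loop F E x = E x x \<union> (\<Union>a\<in>F. \<Union>b\<in>F. lang_seq (E x a) (lang_seq (Wf F E a b) (E b x)))"
definition Dir where "Dir F E x p' = (if p' = x then {pom_one} else \<Union>a\<in>F. lang_seq (E x a) (Wf F E a p'))"
definition Tl where "Tl F E x p' = lang_seq (lang_star (Loop F E x)) (Dir F E x p')"
definition Rl where "Rl F E x p p' = (if p' = x then {} else Wf F E p p') \<union>
   (\<Union>b\<in>F. lang_seq (Wf F E p b) (lang_seq (E b x) (Tl F E x p')))"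

lemma Wf_sub: "\<forall>a b. E a b \<subseteq> pomsets \<Longrightarrow> Wf F E a b \<subseteq> pomsets"
  unfolding Wf_def by (auto intro: walk_in)
lemma Loop_sub: "\<forall>a b. E a b \<subseteq> pomsets \<Longrightarrow> Loop F E x \<subseteq> pomsets"
proof -
  assume a: "\<forall>a b. E a b \<subseteq> pomsets"
  have "\<And>a b. lang_seq (E x a) (lang_seq (Wf F E a b) (E b x)) \<subseteq> pomsets"
    using a by (intro lang_seq_sub Wf_sub) auto
  then show ?thesis unfolding Loop_def using a by blast
qed
lemma Dir_sub: "\<forall>a b. E a b \<subseteq> pomsets \<Longrightarrow> Dir F E x p \<subseteq> pomsets"
proof -
  assume a: "\<forall>a b. E a b \<subseteq> pomsets"
  have "\<And>a b. lang_seq (E x a) (Wf F E a b) \<subseteq> pomsets"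
    using a by (intro lang_seq_sub Wf_sub) auto
  then show ?thesis unfolding Dir_def using pom_one_in by auto
qed
lemma Tl_sub: "\<forall>a b. E a b \<subseteq> pomsets \<Longrightarrow> Tl F E x p \<subseteq> pomsets"
  unfolding Tl_def by (intro lang_seq_sub lang_star_sub Loop_sub Dir_sub)

lemma seq_one_one: "pom_seq pom_one pom_one = (pom_one :: 'a pomset)"
  by (rule seq_one_left[OF pom_one_in])

lemma elim_complete:
  assumes "walk (insert x F) E p W p'" "\<forall>a b. E a b \<subseteq> pomsets"
  shows "(p = x \<longrightarrow> W \<in> Tl F E x p') \<and> (p \<noteq> x \<longrightarrow> W \<in> Rl F E x p p')"
  using assms(1)
proof (induction rule: walk.induct)
  case (w_refl p)
  have "pom_seq pom_one pom_one \<in> Tl F E x x"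
    unfolding Tl_def Dir_def by (intro in_lang_seq star_one) simp
  then have "pom_one \<in> Tl F E x x" by (simp add: seq_one_one)
  moreover have "pom_one \<in> Wf F E p p" unfolding Wf_def by (simp add: walk.w_refl)
  ultimately show ?case unfolding Rl_def by auto
next
  case (w_step p m U V p')
  have EP: "\<And>a b. E a b \<subseteq> pomsets" using assms(2) by blast
  have Uin: "U \<in> pomsets" using w_step(3) EP by blast
  have Vin: "V \<in> pomsets" using walk_in[OF w_step(4) assms(2)] .
  have Wfin: "\<And>a b W. W \<in> Wf F E a b \<Longrightarrow> W \<in> pomsets" using Wf_sub[OF assms(2)] by blast
  have Tin: "\<And>a W. W \<in> Tl F E x a \<Longrightarrow> W \<in> pomsets" using Tl_sub[OF assms(2)] by blast
  have Lin: "\<And>W. W \<in> lang_star (Loop F E x) \<Longrightarrow> W \<in> pomsets"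
    using lang_star_sub[OF Loop_sub[OF assms(2)]] by blast
  have Din: "\<And>a W. W \<in> Dir F E x a \<Longrightarrow> W \<in> pomsets" using Dir_sub[OF assms(2)] by blast
  have Ein: "\<And>a b W. W \<in> E a b \<Longrightarrow> W \<in> pomsets" using EP by blast
  note sa = seq_assoc pom_seq_in
  show ?case
  proof (cases "p = x")
    case px: True
    have "pom_seq U V \<in> Tl F E x p'"
    proof (cases "m = x")
      case True
      then have "V \<in> Tl F E x p'" using w_step.IH by simp
      then obtain L D where LD: "V = pom_seq L D" "L \<in> lang_star (Loop F E x)" "D \<in> Dir F E x p'"
        unfolding Tl_def by (auto elim: lang_seqE)
      have "U \<in> Loop F E x" using w_step(3) px True unfolding Loop_def by simp
      then have "pom_seq U L \<in> lang_star (Loop F E x)" using LD(2) star_step by blast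
      then have "pom_seq (pom_seq U L) D \<in> Tl F E x p'" unfolding Tl_def using LD(3) in_lang_seq by blast
      then show ?thesis using LD(1) seq_assoc Uin Lin[OF LD(2)] Din[OF LD(3)] by metis
    next
      case mx: False
      then have mF: "m \<in> F" using w_step(2) by simp
      have "V \<in> Rl F E x m p'" using w_step.IH mx by simp
      then consider (a) "p' \<noteq> x" "V \<in> Wf F E m p'"
        | (b) b A B T where "b \<in> F" "V = pom_seq A (pom_seq B T)" "A \<in> Wf F E m b" "B \<in> E b x"
                "T \<in> Tl F E x p'"
        unfolding Rl_def by (auto split: if_splits elim!: lang_seqE)
      then show ?thesis
      proof cases
        case a
        have "pom_seq U V \<in> Dir F E x p'" unfolding Dir_def using a mF w_step(3) px
          by (auto intro: in_lang_seq)
        then have "pom_seq pom_one (pom_seq U V) \<in> Tl F E x p'"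
          unfolding Tl_def by (intro in_lang_seq star_one)
        then show ?thesis using seq_one_left pom_seq_in Uin Vin by metis
      next
        case (b b A B T)
        obtain L D where LD: "T = pom_seq L D" "L \<in> lang_star (Loop F E x)" "D \<in> Dir F E x p'"
          using b(5) unfolding Tl_def by (auto elim: lang_seqE)
        have "pom_seq U (pom_seq A B) \<in> Loop F E x" unfolding Loop_def
          using b mF w_step(3) px by (auto intro!: in_lang_seq)
        then have "pom_seq (pom_seq U (pom_seq A B)) L \<in> lang_star (Loop F E x)"
          using LD(2) star_step by blast
        then have 1: "pom_seq (pom_seq (pom_seq U (pom_seq A B)) L) D \<in> Tl F E x p'"
          unfolding Tl_def using LD(3) in_lang_seq by blast
        have iA: "A \<in> pomsets" "B \<in> pomsets" "L \<in> pomsets" "D \<in> pomsets"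
          using Wfin b Ein Lin Din LD by blast+
        have "pom_seq (pom_seq (pom_seq U (pom_seq A B)) L) D = pom_seq U (pom_seq A (pom_seq B (pom_seq L D)))"
          using iA Uin by (simp add: sa)
        then show ?thesis using 1 b(2) LD(1) by simp
      qed
    qed
    then show ?thesis using px by simp
  next
    case px: False
    then have pF: "p \<in> F" using w_step(1) by simp
    have "pom_seq U V \<in> Rl F E x p p'"
    proof (cases "m = x")
      case True
      then have "V \<in> Tl F E x p'" using w_step.IH by simp
      moreover have "pom_one \<in> Wf F E p p" unfolding Wf_def by (simp add: walk.w_refl)
      ultimately have "pom_seq pom_one (pom_seq U V) \<in> Rl F E x p p'"
        unfolding Rl_def using pF w_step(3) True by (blast intro: in_lang_seq)
      then show ?thesis using seq_one_left pom_seq_in Uin Vin by metis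
    next
      case mx: False
      then have mF: "m \<in> F" using w_step(2) by simp
      have "V \<in> Rl F E x m p'" using w_step.IH mx by simp
      then consider (a) "p' \<noteq> x" "V \<in> Wf F E m p'"
        | (b) b A B T where "b \<in> F" "V = pom_seq A (pom_seq B T)" "A \<in> Wf F E m b" "B \<in> E b x"
                "T \<in> Tl F E x p'"
        unfolding Rl_def by (auto split: if_splits elim!: lang_seqE)
      then show ?thesis
      proof cases
        case a
        have "walk F E p (pom_seq U V) p'" using a(2) unfolding Wf_def
          using walk.w_step[where E=E and p=p and m=m and U=U and S=F, OF pF mF w_step(3)] by simp
        then show ?thesis unfolding Rl_def Wf_def using a(1) by simp
      next
        case (b b A B T)
        have "walk F E p (pom_seq U A) b" using b(3) unfolding Wf_def
          using walk.w_step[where E=E and p=p and m=m and U=U and S=F, OF pF mF w_step(3)] by simp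
        then have "pom_seq (pom_seq U A) (pom_seq B T) \<in> Rl F E x p p'"
          unfolding Rl_def Wf_def using b by (blast intro: in_lang_seq)
        moreover have "pom_seq (pom_seq U A) (pom_seq B T) = pom_seq U V"
          using b Uin Wfin Ein Tin by (simp add: sa)
        ultimately show ?thesis by simp
      qed
    qed
    then show ?thesis using px by simp
  qed
qed


lemma elim_sound:
  assumes EP: "\<forall>a b. E a b \<subseteq> pomsets" and xS: "S = insert x F"
  shows "Tl F E x p' \<subseteq> Wf S E x p'" "Rl F E x p p' \<subseteq> Wf S E p p'"
proof -
  have Ein: "\<And>a b W. W \<in> E a b \<Longrightarrow> W \<in> pomsets" using EP by blast
  have mono: "walk S E a W b" if "W \<in> Wf F E a b" for a b W
  proof -
    have "walk F E a W b" using that by (simp add: Wf_def)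
    then show ?thesis by (rule walk_mono) (simp add: xS subset_insertI)
  qed
  have edge: "walk S E a W b" if "a \<in> S" "b \<in> S" "W \<in> E a b" for a b W
    using walk_edge[where E=E and p=a and m=b, OF that Ein[OF that(3)]] .
  have tr: "walk S E a (pom_seq U V) c" if "walk S E a U b" "walk S E b V c" for a b c U V
    using walk_trans[OF that EP] .
  have xin: "x \<in> S" using xS by simp
  have FS: "\<And>a. a \<in> F \<Longrightarrow> a \<in> S" using xS by simp
  have loop: "\<And>W. W \<in> Loop F E x \<Longrightarrow> walk S E x W x"
  proof -
    fix W assume "W \<in> Loop F E x"
    then consider (a) "W \<in> E x x" | (b) a b U A B where "a \<in> F" "b \<in> F" "W = pom_seq U (pom_seq A B)"
      "U \<in> E x a" "A \<in> Wf F E a b" "B \<in> E b x"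
      unfolding Loop_def by (auto elim!: lang_seqE)
    then show "walk S E x W x"
    proof cases
      case a then show ?thesis using edge xin by blast
    next
      case (b a b U A B)
      show ?thesis unfolding b(3)
        by (rule tr[OF edge[OF xin FS[OF b(1)] b(4)] tr[OF mono[OF b(5)] edge[OF FS[OF b(2)] xin b(6)]]])
    qed
  qed
  have star: "\<And>W. W \<in> lang_star (Loop F E x) \<Longrightarrow> walk S E x W x"
  proof -
    fix W assume "W \<in> lang_star (Loop F E x)"
    then show "walk S E x W x"
      by (rule star_induct) (auto intro: walk.w_refl tr loop)
  qed
  have dir: "\<And>W. W \<in> Dir F E x p' \<Longrightarrow> walk S E x W p'"
  proof -
    fix W assume W: "W \<in> Dir F E x p'"
    show "walk S E x W p'"
    proof (cases "p' = x")
      case True then show ?thesis using W unfolding Dir_def by (simp add: walk.w_refl)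
    next
      case False
      then obtain a U A where "a \<in> F" "W = pom_seq U A" "U \<in> E x a" "A \<in> Wf F E a p'"
        using W unfolding Dir_def by (auto elim!: lang_seqE)
      then show ?thesis using tr[OF edge[OF xin FS] mono] by blast
    qed
  qed
  show "Tl F E x p' \<subseteq> Wf S E x p'"
  proof
    fix W assume "W \<in> Tl F E x p'"
    then obtain U V where UV: "W = pom_seq U V" "U \<in> lang_star (Loop F E x)" "V \<in> Dir F E x p'"
      unfolding Tl_def by (auto elim: lang_seqE)
    show "W \<in> Wf S E x p'" unfolding Wf_def using tr[OF star[OF UV(2)] dir[OF UV(3)]] UV(1) by simp
  qed
  show "Rl F E x p p' \<subseteq> Wf S E p p'"
  proof
    fix W assume W: "W \<in> Rl F E x p p'"
    then consider (a) "W \<in> Wf F E p p'"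
      | (b) b A B T where "b \<in> F" "W = pom_seq A (pom_seq B T)" "A \<in> Wf F E p b" "B \<in> E b x"
                "T \<in> Tl F E x p'"
      unfolding Rl_def by (auto split: if_splits elim!: lang_seqE)
    then show "W \<in> Wf S E p p'"
    proof cases
      case a then show ?thesis using mono unfolding Wf_def by blast
    next
      case (b b A B T)
      have "walk S E x T p'" using b(5) \<open>Tl F E x p' \<subseteq> Wf S E x p'\<close> unfolding Wf_def by blast
      then show ?thesis unfolding Wf_def b(2)
        using tr[OF mono[OF b(3)] tr[OF edge[OF FS[OF b(1)] xin b(4)]]] by blast
    qed
  qed
qed

lemma Wf_elim:
  assumes EP: "\<forall>a b. E a b \<subseteq> pomsets" and xS: "S = insert x F"
  shows "Wf S E x p' = Tl F E x p'" "p \<noteq> x \<Longrightarrow> Wf S E p p' = Rl F E x p p'"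
proof -
  show "Wf S E x p' = Tl F E x p'"
    using elim_sound(1)[OF EP xS] elim_complete[OF _ EP] xS unfolding Wf_def by blast
  show "p \<noteq> x \<Longrightarrow> Wf S E p p' = Rl F E x p p'"
    using elim_sound(2)[OF EP xS] elim_complete[OF _ EP] xS unfolding Wf_def by blast
qed

lemma kleene:
  assumes "finite S" "\<forall>a b. E a b \<subseteq> pomsets" "\<forall>a\<in>S. \<forall>b\<in>S. rat (E a b)"
  shows "\<forall>p\<in>S. \<forall>p'\<in>S. rat (Wf S E p p')"
  using assms(1,3)
proof (induction S rule: finite_induct)
  case empty then show ?case by simp
next
  case (insert x F)
  have rE: "\<And>a b. a \<in> insert x F \<Longrightarrow> b \<in> insert x F \<Longrightarrow> rat (E a b)" using insert.prems by blast
  have rW: "\<And>a b. a \<in> F \<Longrightarrow> b \<in> F \<Longrightarrow> rat (Wf F E a b)" using insert.IH rE by blast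
  have rL: "rat (Loop F E x)" unfolding Loop_def
    by (intro rat_un rat_UN rat_seq rE rW insert.hyps(1)) auto
  have rD: "\<And>p'. p' \<in> insert x F \<Longrightarrow> rat (Dir F E x p')" unfolding Dir_def
    by (intro rat_if rat_one rat_UN rat_seq rE rW insert.hyps(1)) auto
  have rT: "\<And>p'. p' \<in> insert x F \<Longrightarrow> rat (Tl F E x p')" unfolding Tl_def
    by (intro rat_seq rat_star rL rD)
  have rR: "\<And>p p'. p \<in> F \<Longrightarrow> p' \<in> insert x F \<Longrightarrow> rat (Rl F E x p p')" unfolding Rl_def
    by (intro rat_un rat_if rat_zero rat_UN rat_seq rE rW rT insert.hyps(1)) auto
  show ?case
  proof (intro ballI)
    fix p p' assume pp: "p \<in> insert x F" "p' \<in> insert x F"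
    show "rat (Wf (insert x F) E p p')"
    proof (cases "p = x")
      case True then show ?thesis using Wf_elim(1)[OF assms(2) refl] rT pp by simp
    next
      case False then show ?thesis using Wf_elim(2)[OF assms(2) refl False] rR pp by simp
    qed
  qed
qed

locale pa_ctx =
  fixes \<delta> :: "'q \<Rightarrow> 'a::finite \<Rightarrow> 'q" and \<gamma> :: "'q \<Rightarrow> 'q \<Rightarrow> 'q \<Rightarrow> 'q"
    and F :: "'q set" and qbot qtop :: 'q
  assumes PA: "is_PA \<delta> \<gamma> F qbot qtop"
    and WN: "well_nested \<delta> \<gamma> F qbot qtop"
    and FS: "fin_supported \<delta> \<gamma> qbot"
begin

abbreviation "tr \<equiv> trace \<delta> \<gamma> F"
abbreviation "Lg \<equiv> PA_lang \<delta> \<gamma> F"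
abbreviation "dp \<equiv> dep \<delta> \<gamma> qbot"
abbreviation "dps \<equiv> dep_strict \<delta> \<gamma> qbot"
abbreviation "sup_q \<equiv> support \<delta> \<gamma> qbot"
abbreviation "seqst \<equiv> sequential_state \<delta> \<gamma> qbot"
abbreviation "recst \<equiv> recursive_state \<delta> \<gamma> F qbot qtop"

lemma bF: "qbot \<notin> F" and tF: "qtop \<in> F"
  and db: "\<delta> qbot a = qbot" and dt: "\<delta> qtop a = qbot"
  and gb: "\<gamma> qbot r s = qbot" and gt: "\<gamma> qtop r s = qbot"
  using PA unfolding is_PA_def by auto

lemma bt_ne: "qbot \<noteq> qtop" using bF tF by auto

lemma dp_refl: "dp x x" unfolding dep_def by simp
lemma dp_trans: "dp x y \<Longrightarrow> dp y z \<Longrightarrow> dp x z" unfolding dep_def by simp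
lemma dp_step: "dep_step \<delta> \<gamma> qbot x y \<Longrightarrow> dp x y" unfolding dep_def by simp

lemma support_iff: "x \<in> sup_q q \<longleftrightarrow> dp x q"
proof
  assume "x \<in> sup_q q"
  moreover have "{y. dp y q} \<in> {S. q \<in> S \<and> (\<forall>p\<in>S. \<forall>p'. dp p' p \<longrightarrow> p' \<in> S)}"
    using dp_refl dp_trans by blast
  ultimately show "dp x q" unfolding support_def by blast
next
  assume "dp x q"
  then show "x \<in> sup_q q" unfolding support_def by blast
qed

lemma fin_sup: "finite (sup_q q)" using FS unfolding fin_supported_def by blast

lemma seq_bt: "seqst qbot" "seqst qtop"
  unfolding sequential_state_def by (simp_all add: gb gt)

lemma bt_step: "dep_step \<delta> \<gamma> qbot a y \<Longrightarrow> y = qbot \<or> y = qtop \<Longrightarrow> a = qbot \<or> a = qtop"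
  by (erule dep_step.cases) (auto simp: db dt gb gt)

lemma bt_closed: "dp y z \<Longrightarrow> z = qbot \<or> z = qtop \<Longrightarrow> y = qbot \<or> y = qtop"
  unfolding dep_def by (induction rule: converse_rtranclp_induct) (auto dest: bt_step)

lemma step_into: "dep_step \<delta> \<gamma> qbot a p \<Longrightarrow> (\<exists>r s. a = r \<and> \<gamma> p r s \<noteq> qbot) \<or>
   (\<exists>r s. a = s \<and> \<gamma> p r s \<noteq> qbot) \<or> (\<exists>b. a = \<delta> p b) \<or> (\<exists>r s. a = \<gamma> p r s)"
  by (erule dep_step.cases) auto

lemma rec_down:
  assumes rp: "recst p" and "dp y p"
  shows "y = p \<or> y = qbot \<or> y = qtop \<or> (\<exists>r. dps r p \<and> dp y r)"
proof -
  have R: "\<And>r s. \<gamma> p r s \<noteq> qbot \<Longrightarrow> s = p \<and> dps r p \<and> \<gamma> p r s = qtop"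
    and D: "\<And>a. \<delta> p a = qbot" using rp unfolding recursive_state_def by auto
  from \<open>dp y p\<close> have "(dep_step \<delta> \<gamma> qbot)\<^sup>*\<^sup>* y p" by (simp add: dep_def)
  then show ?thesis
  proof (induction rule: converse_rtranclp_induct)
    case base then show ?case by simp
  next
    case (step a y')
    from step.IH consider (p) "y' = p" | (bt) "y' = qbot \<or> y' = qtop" | (r) r where "dps r p" "dp y' r"
      by blast
    then show ?case
    proof cases
      case p
      from step_into[OF step.hyps(1)[unfolded p]] show ?thesis
      proof (elim disjE exE conjE)
        fix r s assume "a = r" "\<gamma> p r s \<noteq> qbot" then show ?thesis using R[of r s] dp_refl by auto
      next
        fix r s assume "a = s" "\<gamma> p r s \<noteq> qbot" then show ?thesis using R[of r s] by auto
      next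
        fix b assume "a = \<delta> p b" then show ?thesis using D by simp
      next
        fix r s assume "a = \<gamma> p r s" then show ?thesis using R[of r s] by auto
      qed
    next
      case bt then show ?thesis using bt_step step.hyps(1) by blast
    next
      case r then show ?thesis using dp_trans dp_step[OF step.hyps(1)] by blast
    qed
  qed
qed

lemma strict_trans: "dps r p \<Longrightarrow> dp p q \<Longrightarrow> dps r q"
  unfolding dep_strict_def using dp_trans by blast

lemma rec_strict: assumes "seqst q" "recst p" "dp p q" shows "dps p q"
proof -
  have "\<not> dp q p"
  proof
    assume "dp q p"
    from rec_down[OF assms(2) this] consider "q = p" | "q = qbot \<or> q = qtop" | r where "dps r p" "dp q r"
      by blast
    then show False
    proof cases
      case 1 then show False using assms(1,2) unfolding recursive_state_def by simp
    next
      case 2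
      then have "p = qbot \<or> p = qtop" using bt_closed assms(3) by blast
      then show False using seq_bt assms(2) unfolding recursive_state_def by auto
    next
      case 3 then show False using assms(3) dp_trans unfolding dep_strict_def by blast
    qed
  qed
  then show ?thesis using assms(3) unfolding dep_strict_def by simp
qed

lemma card_less: assumes "dps r q" shows "card (sup_q r) < card (sup_q q)"
proof (rule psubset_card_mono[OF fin_sup])
  have "sup_q r \<subseteq> sup_q q"
  proof
    fix x assume "x \<in> sup_q r"
    then have "dp x r" by (simp add: support_iff)
    then show "x \<in> sup_q q" using assms dp_trans unfolding support_iff dep_strict_def by blast
  qed
  moreover have "q \<in> sup_q q" "q \<notin> sup_q r" using assms dp_refl unfolding support_iff dep_strict_def by auto
  ultimately show "sup_q r \<subset> sup_q q" by blast
qed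

lemma trace_dep: "tr q W q' \<Longrightarrow> dp q' q"
  by (induction rule: trace.induct) (auto intro: dp_refl dp_trans dp_step dep_step.intros)

lemma trace_pom: "tr q W q' \<Longrightarrow> W \<in> pomsets"
  by (induction rule: trace.induct) (auto intro: pom_one_in pom_sym_in pom_seq_in pom_par_in)

lemma Lg_pom: "Lg q \<subseteq> pomsets" unfolding PA_lang_def using trace_pom by blast

lemma trace_bot: "tr p W q' \<Longrightarrow> p = qbot \<Longrightarrow> q' = qbot"
  by (induction rule: trace.induct) (auto simp: db gb)

end

lemma dagger_one: "pom_one \<in> lang_dagger A"
  unfolding lang_dagger_def by (auto intro: exI[of _ 0])

lemma dagger_step: assumes "U \<in> A" "V \<in> lang_dagger A" shows "pom_par U V \<in> lang_dagger A"
proof -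
  obtain n where "V \<in> lang_ppow A n" using assms(2) unfolding lang_dagger_def by blast
  then have "pom_par U V \<in> lang_ppow A (Suc n)" using assms(1) unfolding lang_ppow.simps lang_par_def by blast
  then show ?thesis unfolding lang_dagger_def by blast
qed

context pa_ctx
begin

lemma rec_facts: assumes "recst q"
  shows "q \<in> F" "q \<noteq> qbot" "q \<noteq> qtop" "\<And>a. \<delta> q a = qbot"
    "\<And>r s. \<gamma> q r s \<noteq> qbot \<Longrightarrow> s = q \<and> dps r q \<and> \<gamma> q r s = qtop"
  using assms seq_bt bF unfolding recursive_state_def by auto

lemma rec_trace:
  assumes rq: "recst q"
  shows "tr x W y \<Longrightarrow>
    (x = q \<longrightarrow> (y = q \<and> W = pom_one) \<or> (y = qtop \<and> W \<in> lang_dagger (\<Union>r\<in>{r. \<gamma> q r q \<noteq> qbot}. Lg r)) \<or> y = qbot) \<and>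
    (x = qtop \<longrightarrow> (y = qtop \<and> W = pom_one) \<or> y = qbot) \<and> (x = qbot \<longrightarrow> y = qbot)"
proof (induction rule: trace.induct)
  case (tr_one p)
  then show ?case by simp
next
  case (tr_sym p a)
  then show ?case using rec_facts[OF rq] by (auto simp: db dt)
next
  case (tr_seq x U m V y)
  have Uin: "U \<in> pomsets" using trace_pom[OF tr_seq.hyps(1)] .
  have Vin: "V \<in> pomsets" using trace_pom[OF tr_seq.hyps(2)] .
  have ne: "q \<noteq> qbot" "q \<noteq> qtop" "qtop \<noteq> qbot" using rec_facts[OF rq] bt_ne by auto
  show ?case
    using tr_seq.IH ne seq_one_one seq_one_left[OF Vin] seq_one_right[OF Uin]
    by (smt (verit))
next
  case (tr_par r U r' s V s' x)
  let ?Dg = "lang_dagger (\<Union>r\<in>{r. \<gamma> q r q \<noteq> qbot}. Lg r)"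
  have "pom_par U V \<in> ?Dg \<and> \<gamma> q r s = qtop" if "\<gamma> q r s \<noteq> qbot"
  proof -
    have sq: "s = q" and g: "\<gamma> q r s = qtop" using rec_facts(5)[OF rq that] by auto
    have "U \<in> Lg r" using tr_par.hyps(1,2) unfolding PA_lang_def by blast
    moreover have "r \<in> {r. \<gamma> q r q \<noteq> qbot}" using that sq by simp
    ultimately have U: "U \<in> (\<Union>r\<in>{r. \<gamma> q r q \<noteq> qbot}. Lg r)" by blast
    have "s' \<noteq> qbot" using tr_par.hyps(4) bF by auto
    then have "V \<in> ?Dg" using tr_par.IH(2) sq dagger_one by auto
    then show ?thesis using dagger_step[OF U] g by simp
  qed
  then show ?case using rec_facts[OF rq] by (auto simp: gb gt)
qed

lemma rec_lang: assumes rq: "recst q"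
  shows "Lg q = lang_dagger (\<Union>r\<in>{r. \<gamma> q r q \<noteq> qbot}. Lg r)"
proof
  show "Lg q \<subseteq> lang_dagger (\<Union>r\<in>{r. \<gamma> q r q \<noteq> qbot}. Lg r)"
  proof
    fix W assume "W \<in> Lg q"
    then obtain y where y: "y \<in> F" "tr q W y" unfolding PA_lang_def by blast
    have "y \<noteq> qbot" using y(1) bF by auto
    then show "W \<in> lang_dagger (\<Union>r\<in>{r. \<gamma> q r q \<noteq> qbot}. Lg r)"
      using rec_trace[OF rq y(2)] dagger_one by auto
  qed
next
  show "lang_dagger (\<Union>r\<in>{r. \<gamma> q r q \<noteq> qbot}. Lg r) \<subseteq> Lg q"
  proof
    fix W assume "W \<in> lang_dagger (\<Union>r\<in>{r. \<gamma> q r q \<noteq> qbot}. Lg r)"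
    then obtain n where "W \<in> lang_ppow (\<Union>r\<in>{r. \<gamma> q r q \<noteq> qbot}. Lg r) n"
      unfolding lang_dagger_def by blast
    then show "W \<in> Lg q"
    proof (induction n arbitrary: W)
      case 0
      then show ?case using rec_facts(1)[OF rq] unfolding PA_lang_def by (auto intro: tr_one)
    next
      case (Suc n)
      obtain U V where UV0: "W = pom_par U V" "U \<in> (\<Union>r\<in>{r. \<gamma> q r q \<noteq> qbot}. Lg r)"
          "V \<in> lang_ppow (\<Union>r\<in>{r. \<gamma> q r q \<noteq> qbot}. Lg r) n"
        using Suc.prems unfolding lang_ppow.simps lang_par_def by blast
      obtain r where r: "\<gamma> q r q \<noteq> qbot" "U \<in> Lg r" using UV0(2) by blast
      have UV: "W = pom_par U V" "\<gamma> q r q \<noteq> qbot" "U \<in> Lg r" "V \<in> Lg q"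
        using UV0(1) r Suc.IH[OF UV0(3)] by auto
      obtain r' where r': "r' \<in> F" "tr r U r'" using UV(3) unfolding PA_lang_def by blast
      obtain s' where s': "s' \<in> F" "tr q V s'" using UV(4) unfolding PA_lang_def by blast
      have "tr q W (\<gamma> q r q)" unfolding UV(1) by (rule tr_par[OF r'(2,1) s'(2,1)])
      moreover have "\<gamma> q r q = qtop" using rec_facts(5)[OF rq UV(2)] by simp
      ultimately show ?case using tF unfolding PA_lang_def by auto
    qed
  qed
qed

end

context pa_ctx
begin

definition Eg :: "'q \<Rightarrow> 'q \<Rightarrow> 'a pomset set" where
  "Eg p p' = {W. (\<exists>a. W = pom_sym a \<and> p' = \<delta> p a) \<or>
      (\<exists>r s U V. W = pom_par U V \<and> U \<in> Lg r \<and> V \<in> Lg s \<and> p' = \<gamma> p r s)}"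

lemma dp_left: "\<gamma> q r s \<noteq> qbot \<Longrightarrow> dp r q"
  unfolding dep_def by (rule r_into_rtranclp) (rule ds_left)

lemma dp_right: "\<gamma> q r s \<noteq> qbot \<Longrightarrow> dp s q"
  unfolding dep_def by (rule r_into_rtranclp) (rule ds_right)

lemma Eg_pom1: "W \<in> Eg a b \<Longrightarrow> W \<in> pomsets"
  unfolding Eg_def by (auto intro!: pom_sym_in pom_par_in dest: Lg_pom[THEN subsetD])

lemma Eg_pom: "\<forall>a b. Eg a b \<subseteq> pomsets"
  using Eg_pom1 by blast

lemma walk_trace: "walk S Eg p W p' \<Longrightarrow> tr p W p'"
proof (induction rule: walk.induct)
  case (w_refl p) then show ?case by (rule tr_one)
next
  case (w_step p m U V p')
  have "tr p U m" using w_step(3) unfolding Eg_def PA_lang_def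
    by (auto intro: trace.tr_sym trace.tr_par)
  then show ?case using w_step.IH by (rule tr_seq)
qed

lemma trace_walk: "tr p W p' \<Longrightarrow> p' \<noteq> qbot \<Longrightarrow> dp p q \<Longrightarrow> walk (sup_q q - {qbot}) Eg p W p'"
proof (induction rule: trace.induct)
  case (tr_one p) show ?case by (rule walk.w_refl)
next
  case (tr_sym p a)
  have "p \<noteq> qbot" using tr_sym(1) db by auto
  moreover have "dp (\<delta> p a) q" using dp_trans[OF dp_step[OF ds_delta] tr_sym(2)] .
  ultimately have "p \<in> sup_q q - {qbot}" "\<delta> p a \<in> sup_q q - {qbot}"
    using tr_sym support_iff by auto
  moreover have "pom_sym a \<in> Eg p (\<delta> p a)" unfolding Eg_def by blast
  ultimately show ?case using walk_edge pom_sym_in by metis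
next
  case (tr_seq p U m V p')
  have "m \<noteq> qbot" using trace_bot[OF tr_seq.hyps(2)] tr_seq.prems(1) by blast
  moreover have "dp m q" using dp_trans[OF trace_dep[OF tr_seq.hyps(1)] tr_seq.prems(2)] .
  ultimately have "walk (sup_q q - {qbot}) Eg p U m" "walk (sup_q q - {qbot}) Eg m V p'"
    using tr_seq.IH tr_seq.prems by auto
  then show ?case using walk_trans Eg_pom by metis
next
  case (tr_par r U r' s V s' p)
  have "p \<noteq> qbot" using tr_par.prems(1) gb by auto
  moreover have "dp (\<gamma> p r s) q" using dp_trans[OF dp_step[OF ds_gamma] tr_par.prems(2)] .
  ultimately have "p \<in> sup_q q - {qbot}" "\<gamma> p r s \<in> sup_q q - {qbot}"
    using tr_par.prems support_iff by auto
  moreover have "pom_par U V \<in> Eg p (\<gamma> p r s)" unfolding Eg_def PA_lang_def using tr_par.hyps by blast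
  moreover have "pom_par U V \<in> pomsets"
    using pom_par_in trace_pom tr_par.hyps(1,3) by blast
  ultimately show ?case using walk_edge by metis
qed

lemma Eg_rat:
  assumes sq: "seqst q" and IH: "\<And>r. dps r q \<Longrightarrow> rat (Lg r)"
    and p: "p \<in> sup_q q - {qbot}" and p': "p' \<in> sup_q q - {qbot}"
  shows "rat (Eg p p')"
proof -
  let ?P = "{(r, s). r \<in> sup_q q \<and> s \<in> sup_q q \<and> \<gamma> p r s = p'}"
  have dpq: "dp p q" using p support_iff by auto
  have eq: "Eg p p' = (\<Union>a\<in>{a. \<delta> p a = p'}. {pom_sym a}) \<union> (\<Union>rs\<in>?P. lang_par (Lg (fst rs)) (Lg (snd rs)))"
  proof
    show "Eg p p' \<subseteq> (\<Union>a\<in>{a. \<delta> p a = p'}. {pom_sym a}) \<union> (\<Union>rs\<in>?P. lang_par (Lg (fst rs)) (Lg (snd rs)))"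
    proof
      fix W assume "W \<in> Eg p p'"
      then consider (a) a where "W = pom_sym a" "p' = \<delta> p a"
        | (b) r s U V where "W = pom_par U V" "U \<in> Lg r" "V \<in> Lg s" "p' = \<gamma> p r s"
        unfolding Eg_def by blast
      then show "W \<in> (\<Union>a\<in>{a. \<delta> p a = p'}. {pom_sym a}) \<union> (\<Union>rs\<in>?P. lang_par (Lg (fst rs)) (Lg (snd rs)))"
      proof cases
        case a then show ?thesis by auto
      next
        case (b r s U V)
        have ne: "\<gamma> p r s \<noteq> qbot" using b(4) p' by auto
        have "dp r q" "dp s q" using dp_trans[OF dp_left[OF ne] dpq]
            dp_trans[OF dp_right[OF ne] dpq] by auto
        then have "(r, s) \<in> ?P" using b(4) support_iff by auto
        moreover have "W \<in> lang_par (Lg r) (Lg s)" using b unfolding lang_par_def by blast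
        ultimately show ?thesis by force
      qed
    qed
  next
    show "(\<Union>a\<in>{a. \<delta> p a = p'}. {pom_sym a}) \<union> (\<Union>rs\<in>?P. lang_par (Lg (fst rs)) (Lg (snd rs))) \<subseteq> Eg p p'"
    proof (rule Un_least)
      show "(\<Union>a\<in>{a. \<delta> p a = p'}. {pom_sym a}) \<subseteq> Eg p p'" unfolding Eg_def by auto
      show "(\<Union>rs\<in>?P. lang_par (Lg (fst rs)) (Lg (snd rs))) \<subseteq> Eg p p'"
      proof
        fix W assume "W \<in> (\<Union>rs\<in>?P. lang_par (Lg (fst rs)) (Lg (snd rs)))"
        then obtain r s U V where "\<gamma> p r s = p'" "W = pom_par U V" "U \<in> Lg r" "V \<in> Lg s"
          unfolding lang_par_def by auto
        then show "W \<in> Eg p p'" unfolding Eg_def by blast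
      qed
    qed
  qed
  have fP: "finite ?P"
    by (rule finite_subset[of _ "sup_q q \<times> sup_q q"]) (auto simp: fin_sup)
  have rP: "rat (lang_par (Lg (fst rs)) (Lg (snd rs)))" if rsP: "rs \<in> ?P" for rs
  proof -
    obtain r s where rs: "rs = (r, s)" "r \<in> sup_q q" "s \<in> sup_q q" "\<gamma> p r s = p'" using rsP by (cases rs) auto
    have ne: "\<gamma> p r s \<noteq> qbot" using rs(4) p' by auto
    have "dps r q \<and> dps s q"
    proof (cases "seqst p")
      case True
      then have "dps r p" "dps s p" using ne unfolding sequential_state_def by auto
      then show ?thesis using strict_trans dpq by blast
    next
      case False
      then have rp: "recst p" using WN unfolding well_nested_def by blast
      then have "s = p" "dps r p" using ne unfolding recursive_state_def by auto
      then show ?thesis using strict_trans dpq rec_strict[OF sq rp dpq] by blast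
    qed
    then show ?thesis using rs(1) IH by (auto intro: rat_par)
  qed
  show ?thesis unfolding eq
    by (intro rat_un rat_UN rat_sym fP rP) simp_all
qed

lemma seq_lang:
  assumes sq: "seqst q" and IH: "\<And>r. dps r q \<Longrightarrow> rat (Lg r)"
  shows "rat (Lg q)"
proof (cases "q = qbot")
  case True
  have "Lg q = {}" unfolding PA_lang_def using trace_bot True bF by blast
  then show ?thesis using rat_zero by simp
next
  case False
  let ?S = "sup_q q - {qbot}"
  have qS: "q \<in> ?S" using False dp_refl support_iff by auto
  have fS: "finite ?S" using fin_sup by simp
  have rW: "\<forall>p\<in>?S. \<forall>p'\<in>?S. rat (Wf ?S Eg p p')"
    by (rule kleene[OF fS Eg_pom]) (use Eg_rat[OF sq IH] in blast)
  have eq: "Lg q = (\<Union>p'\<in>F \<inter> ?S. Wf ?S Eg q p')"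
  proof
    show "Lg q \<subseteq> (\<Union>p'\<in>F \<inter> ?S. Wf ?S Eg q p')"
    proof
      fix W assume "W \<in> Lg q"
      then obtain y where y: "y \<in> F" "tr q W y" unfolding PA_lang_def by blast
      have "y \<noteq> qbot" using y(1) bF by auto
      moreover have "dp y q" using trace_dep[OF y(2)] .
      ultimately have "y \<in> F \<inter> ?S" "walk ?S Eg q W y"
        using y trace_walk[OF y(2) _ dp_refl] support_iff by auto
      then show "W \<in> (\<Union>p'\<in>F \<inter> ?S. Wf ?S Eg q p')" unfolding Wf_def by blast
    qed
  next
    show "(\<Union>p'\<in>F \<inter> ?S. Wf ?S Eg q p') \<subseteq> Lg q"
      unfolding Wf_def PA_lang_def using walk_trace by blast
  qed
  show ?thesis unfolding eq
    by (rule rat_UN) (use fS rW qS in auto)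
qed

lemma all_rat: "rat (Lg q)"
proof (induction "card (sup_q q)" arbitrary: q rule: less_induct)
  case less
  have IH: "\<And>r. dps r q \<Longrightarrow> rat (Lg r)" using less card_less by blast
  show ?case
  proof (cases "seqst q")
    case True then show ?thesis using seq_lang IH by blast
  next
    case False
    then have rq: "recst q" using WN unfolding well_nested_def by blast
    have fR: "finite {r. \<gamma> q r q \<noteq> qbot}"
      by (rule finite_subset[OF _ fin_sup[of q]]) (auto simp: support_iff intro: dp_left)
    have "rat (\<Union>r\<in>{r. \<gamma> q r q \<noteq> qbot}. Lg r)"
      by (rule rat_UN[OF fR]) (use IH rec_facts(5)[OF rq] in auto)
    then show ?thesis unfolding rec_lang[OF rq] by (rule rat_dagger)
  qed
qed

end

theorem mainTheorem1:
  fixes \<delta> :: "'q \<Rightarrow> 'a::finite \<Rightarrow> 'q"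
    and \<gamma> :: "'q \<Rightarrow> 'q \<Rightarrow> 'q \<Rightarrow> 'q"
    and F :: "'q set"
    and qbot qtop :: 'q
  assumes "is_PA \<delta> \<gamma> F qbot qtop"
    and "well_nested \<delta> \<gamma> F qbot qtop"
    and "fin_supported \<delta> \<gamma> qbot"
  shows "\<forall>q. \<exists>e :: 'a spr. spr_sem e = PA_lang \<delta> \<gamma> F q"
proof -
  interpret pa_ctx \<delta> \<gamma> F qbot qtop using assms by unfold_locales
  show ?thesis using all_rat unfolding rat_def by blast
qed

end
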